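(* If $G$ is a Tutte-Berge graph, then the induced subgraph of $G$ on $D(G)$ has no edges, i.e. $D(G)$ consists of isolated vertices only.
   Context: $\nu(G)$ is the matching number of $G$. For $U\subseteq V(G)$, $N_G(U)$ is the set of vertices adjacent to at least one vertex of $U$. $G$ is a Tutte-Berge graph if there exists an independent set $T$ of $G$ with $|T| = |N_G(T)| + |V(G)| - 2\nu(G)$. $D(G)$ is the set of vertices of $G$ left uncovered by at least one maximum matching of $G$. *)

theory Defs
  imports Main
begin

definition graph :: "'a set \<Rightarrow> ('a \<Rightarrow> 'a \<Rightarrow> bool) \<Rightarrow> bool" where
  "graph V E \<longleftrightarrow> finite V \<and> (\<forall>u v. E u v \<longrightarrow> E v u)
     \<and> (\<forall>u. \<not> E u u) \<and> (\<forall>u v. E u v \<longrightarrow> u \<in> V \<and> v \<in> V)"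

definition matching :: "'a set \<Rightarrow> ('a \<Rightarrow> 'a \<Rightarrow> bool) \<Rightarrow> 'a set set \<Rightarrow> bool" where
  "matching V E M \<longleftrightarrow> (\<forall>e\<in>M. \<exists>u v. e = {u, v} \<and> E u v)
     \<and> (\<forall>e\<in>M. \<forall>f\<in>M. e \<noteq> f \<longrightarrow> e \<inter> f = {})"

definition matching_number :: "'a set \<Rightarrow> ('a \<Rightarrow> 'a \<Rightarrow> bool) \<Rightarrow> nat" where
  "matching_number V E = Max {card M | M. matching V E M}"

definition max_matching :: "'a set \<Rightarrow> ('a \<Rightarrow> 'a \<Rightarrow> bool) \<Rightarrow> 'a set set \<Rightarrow> bool" where
  "max_matching V E M \<longleftrightarrow> matching V E M \<and> card M = matching_number V E"

definition nbhd :: "'a set \<Rightarrow> ('a \<Rightarrow> 'a \<Rightarrow> bool) \<Rightarrow> 'a set \<Rightarrow> 'a set" where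
  "nbhd V E U = {v \<in> V. \<exists>u\<in>U. E u v}"

definition independent :: "'a set \<Rightarrow> ('a \<Rightarrow> 'a \<Rightarrow> bool) \<Rightarrow> 'a set \<Rightarrow> bool" where
  "independent V E T \<longleftrightarrow> T \<subseteq> V \<and> (\<forall>u\<in>T. \<forall>v\<in>T. \<not> E u v)"

definition tutte_berge_graph :: "'a set \<Rightarrow> ('a \<Rightarrow> 'a \<Rightarrow> bool) \<Rightarrow> bool" where
  "tutte_berge_graph V E \<longleftrightarrow> (\<exists>T. independent V E T \<and>
     int (card T) = int (card (nbhd V E T)) + int (card V) - 2 * int (matching_number V E))"

definition D_set :: "'a set \<Rightarrow> ('a \<Rightarrow> 'a \<Rightarrow> bool) \<Rightarrow> 'a set" where
  "D_set V E = {v \<in> V. \<exists>M. max_matching V E M \<and> v \<notin> \<Union>M}"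

end

theory Submission
  imports Defs
begin

lemma unmatched_in_T:
  assumes g: "graph V E" and ind: "independent V E T"
    and eq: "int (card T) = int (card (nbhd V E T)) + int (card V) - 2 * int (matching_number V E)"
    and mm: "max_matching V E M"
  shows "V - \<Union>M \<subseteq> T"
proof -
  have finV: "finite V" and sym: "\<And>u v. E u v \<Longrightarrow> E v u" and irr: "\<And>u. \<not> E u u"
    and inV: "\<And>u v. E u v \<Longrightarrow> u \<in> V \<and> v \<in> V" using g unfolding graph_def by auto
  have mat: "matching V E M" and cM: "card M = matching_number V E" using mm unfolding max_matching_def by auto
  have edge: "\<And>e. e \<in> M \<Longrightarrow> \<exists>u v. e = {u, v} \<and> E u v" using mat unfolding matching_def by auto
  have disj: "\<And>e f. e \<in> M \<Longrightarrow> f \<in> M \<Longrightarrow> e \<noteq> f \<Longrightarrow> e \<inter> f = {}" using mat unfolding matching_def by auto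
  have MV: "M \<subseteq> Pow V" using edge inV by fastforce
  have finM: "finite M" using MV finV by (meson finite_Pow_iff finite_subset)
  have UV: "\<Union>M \<subseteq> V" using MV by auto
  have c2: "\<And>e. e \<in> M \<Longrightarrow> card e = 2"
  proof -
    fix e assume "e \<in> M"
    then obtain u v where "e = {u,v}" "E u v" using edge by blast
    then show "card e = 2" using irr by (metis card_2_iff)
  qed
  have cU: "card (\<Union>M) = 2 * card M"
  proof -
    have "card (\<Union>M) = sum card M"
      by (rule card_Union_disjoint) (use disj c2 in \<open>auto simp: pairwise_def disjnt_def intro: card_ge_0_finite\<close>)
    also have "\<dots> = sum (\<lambda>_. 2) M" using c2 by (rule sum.cong[OF refl])
    finally show ?thesis by simp
  qed
  have TV: "T \<subseteq> V" and Tind: "\<And>u v. u \<in> T \<Longrightarrow> v \<in> T \<Longrightarrow> \<not> E u v" using ind unfolding independent_def by auto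
  have partner: "\<And>t. t \<in> \<Union>M \<Longrightarrow> \<exists>w. {t,w} \<in> M \<and> E t w"
  proof -
    fix t assume "t \<in> \<Union>M"
    then obtain e where "e \<in> M" "t \<in> e" by auto
    then obtain a b where "e = {a,b}" "E a b" using edge by blast
    show "\<exists>w. {t,w} \<in> M \<and> E t w"
    proof (cases "t = a")
      case True
      then show ?thesis using \<open>e = {a,b}\<close> \<open>E a b\<close> \<open>e \<in> M\<close> by blast
    next
      case False
      then have "t = b" using \<open>e = {a,b}\<close> \<open>t \<in> e\<close> by blast
      moreover have "{b,a} = e" using \<open>e = {a,b}\<close> by blast
      ultimately show ?thesis using sym[OF \<open>E a b\<close>] \<open>e \<in> M\<close> by blast
    qed
  qed
  define f where "f t = (SOME w. {t,w} \<in> M \<and> E t w)" for t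
  have fP: "\<And>t. t \<in> \<Union>M \<Longrightarrow> {t, f t} \<in> M \<and> E t (f t)"
    unfolding f_def by (rule someI_ex) (rule partner)
  have inj: "inj_on f (T \<inter> \<Union>M)"
  proof (rule inj_onI)
    fix x y assume x: "x \<in> T \<inter> \<Union>M" and y: "y \<in> T \<inter> \<Union>M" and fxy: "f x = f y"
    have a: "{x, f x} \<in> M" "{y, f y} \<in> M" "E x (f x)" "E y (f y)" using fP x y by auto
    have "{x, f x} = {y, f y}"
    proof (rule ccontr)
      assume "{x, f x} \<noteq> {y, f y}"
      then have "{x, f x} \<inter> {y, f y} = {}" using disj a by blast
      then show False using fxy by auto
    qed
    then have "x \<in> {y, f y}" by blast
    moreover have "x \<noteq> f y" using a(3) irr fxy by auto
    ultimately show "x = y" by blast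
  qed
  have img: "f ` (T \<inter> \<Union>M) \<subseteq> nbhd V E T"
    using fP inV unfolding nbhd_def by fastforce
  have finN: "finite (nbhd V E T)" using finV unfolding nbhd_def by auto
  have le1: "card (T \<inter> \<Union>M) \<le> card (nbhd V E T)"
    using card_inj_on_le[OF inj img finN] .
  have finT: "finite T" using TV finV finite_subset by blast
  have cTd: "card (T - \<Union>M) = card T - card (T \<inter> \<Union>M)"
  proof -
    have "T - \<Union>M = T - (T \<inter> \<Union>M)" by blast
    moreover have "finite (T \<inter> \<Union>M)" using finT by simp
    ultimately show ?thesis using card_Diff_subset[of "T \<inter> \<Union>M" T] by simp
  qed
  have cTle: "card (T \<inter> \<Union>M) \<le> card T" using finT by (simp add: card_mono)
  have cVd: "card (V - \<Union>M) = card V - card (\<Union>M)"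
    using UV finV by (meson card_Diff_subset finite_subset)
  have cUle: "card (\<Union>M) \<le> card V" using UV finV card_mono by blast
  have ge: "card (V - \<Union>M) \<le> card (T - \<Union>M)"
    using cTd cVd cU cM eq le1 cTle cUle by linarith
  have sub: "T - \<Union>M \<subseteq> V - \<Union>M" using TV by auto
  have "T - \<Union>M = V - \<Union>M"
  proof (rule card_subset_eq[OF _ sub])
    show "finite (V - \<Union>M)" using finV by simp
    then show "card (T - \<Union>M) = card (V - \<Union>M)" using ge card_mono[OF _ sub] by linarith
  qed
  then show ?thesis by auto
qed

theorem lemma2p10:
  assumes "graph V E" and "tutte_berge_graph V E"
  shows "\<forall>u\<in>D_set V E. \<forall>v\<in>D_set V E. \<not> E u v"
proof (intro ballI)
  fix u v assume u: "u \<in> D_set V E" and v: "v \<in> D_set V E"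
  obtain T where ind: "independent V E T" and eq: "int (card T) = int (card (nbhd V E T)) + int (card V) - 2 * int (matching_number V E)"
    using assms(2) unfolding tutte_berge_graph_def by blast
  have "\<And>x. x \<in> D_set V E \<Longrightarrow> x \<in> T"
  proof -
    fix x assume "x \<in> D_set V E"
    then obtain M where "x \<in> V" "max_matching V E M" "x \<notin> \<Union>M" unfolding D_set_def by blast
    then show "x \<in> T" using unmatched_in_T[OF assms(1) ind eq] by blast
  qed
  then show "\<not> E u v" using u v ind unfolding independent_def by blast
qed

end
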